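(* Let $\Sigma$ be a set and let $1\le p<\infty$. Suppose $s$ is a sane scoring function on $\Sigma$ such that the distance $d$ on $\Sigma$ defined by $d(a,b)=(s(a,a)-s(a,b))^{1/p}$ is a quasi-metric on $\Sigma$, and suppose $\gamma,\delta\in\Gamma_{\mathrm{CL}}(\Sigma)$ satisfy, for all $a,b\in\Sigma$, \[\gamma(b)-\gamma(a)\le d^p(a,b)\quad\text{and}\quad s(a,a)+\delta(a)-s(b,b)-\delta(b)\le d^p(a,b).\] Let $S$ be the global similarity with respect to $s$, $\gamma$ and $\delta$, and let $\alpha(x)=\gamma(x)^{1/p}$ and $\beta(x)=(S(x,x)+\delta(x))^{1/p}$ for all $x\in\Sigma^+$. Then the $\ell^p$ edit distance $D$ on $\Sigma^*$ extending $d$, $\alpha$ and $\beta$ is a quasi-metric on $\Sigma^*$, and for all $x,y\in\Sigma^*$, \[D(x,y)=\big(S(x,x)-S(x,y)\big)^{1/p}.\]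
   Context: $\Sigma^*$ is the free monoid on $\Sigma$ (finite words, concatenation, empty word $e$), $\Sigma^+=\Sigma^*\setminus\{e\}$; for $w=w_1\cdots w_n$, $|w|=n$, $\bar w_k=w_1\cdots w_k$, $\bar w_0=e$. A quasi-metric on $X$ is a map $q:X\times X\to\mathbb{R}_{\ge0}$ with $q(x,y)=q(y,x)=0\iff x=y$ and $q(x,z)\le q(x,y)+q(y,z)$. A sane scoring function $s:X\times X\to\mathbb{R}$ satisfies $s(x,x)>0$, $s(x,x)\ge s(x,y)$, $s(x,x)\ge s(y,x)$ for all $x,y$. A gap penalty over $\Sigma^+$ is a positive function $\gamma:\Sigma^+\to\mathbb{R}$ with $\gamma(u)+\gamma(v)\ge\gamma(uv)$; $\Gamma(\Sigma)$ is the set of these. $\gamma$ is increasing if $\gamma(uxv)\ge\gamma(uv)$ for all $u,v,x\in\Sigma^*$. $\Gamma_{\mathrm{CL}}(\Sigma)$ (composition-length gap penalties) is the set of increasing $\gamma\in\Gamma(\Sigma)$ of the form $\gamma(z)=\sum_i\phi(z_i)+\psi(|z|)$ for some $\phi:\Sigma\to\mathbb{R}$, $\psi:\mathbb{N}\to\mathbb{R}$. Global similarity: $S(e,e)=0$, $S(e,\bar y_j)=-\gamma(\bar y_j)$, $S(\bar x_i,e)=-\delta(\bar x_i)$, and for $i,j\ge1$ \[S(\bar x_i,\bar y_j)=\max\Big\{S(\bar x_{i-1},\bar y_{j-1})+s(x_i,y_j),\ \max_{1\le k\le j}\{S(\bar x_i,\bar y_{j-k})-\gamma(y_{j-k+1}\cdots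 y_j)\},\ \max_{1\le k\le i}\{S(\bar x_{i-k},\bar y_j)-\delta(x_{i-k+1}\cdots x_i)\}\Big\},\] $S(x,y)=S(\bar x_{|x|},\bar y_{|y|})$. $\ell^p$ edit distance extending $d$, $\alpha$, $\beta$ (with $\alpha^p,\beta^p\in\Gamma(\Sigma)$): $D(e,e)=0$, $D(e,\bar y_j)=\alpha(\bar y_j)$, $D(\bar x_i,e)=\beta(\bar x_i)$, and for $i,j\ge1$ \[D(\bar x_i,\bar y_j)=\Big(\min\Big\{D^p(\bar x_{i-1},\bar y_{j-1})+d^p(x_i,y_j),\ \min_{1\le k\le j}\{D^p(\bar x_i,\bar y_{j-k})+\alpha^p(y_{j-k+1}\cdots y_j)\},\ \min_{1\le k\le i}\{D^p(\bar x_{i-k},\bar y_j)+\beta^p(x_{i-k+1}\cdots x_i)\}\Big\}\Big)^{1/p},\] $D(x,y)=D(\bar x_{|x|},\bar y_{|y|})$. *)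

theory Defs
  imports Main "HOL.Real" "HOL.Transcendental"
begin

text \<open>Words over the alphabet (the type 'a) are lists; the empty word e is [].
  Sigma^+ corresponds to nonempty lists.\<close>

definition quasi_metric :: "('b \<Rightarrow> 'b \<Rightarrow> real) \<Rightarrow> bool" where
  "quasi_metric q \<longleftrightarrow>
     (\<forall>x y. q x y \<ge> 0) \<and>
     (\<forall>x y. (q x y = 0 \<and> q y x = 0) \<longleftrightarrow> x = y) \<and>
     (\<forall>x y z. q x z \<le> q x y + q y z)"

definition sane_scoring :: "('a \<Rightarrow> 'a \<Rightarrow> real) \<Rightarrow> bool" where
  "sane_scoring s \<longleftrightarrow> (\<forall>x y. s x x > 0 \<and> s x x \<ge> s x y \<and> s x x \<ge> s y x)"

text \<open>Gap penalty over Sigma^+ (only the values on nonempty words matter).\<close>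
definition gap_penalty :: "('a list \<Rightarrow> real) \<Rightarrow> bool" where
  "gap_penalty g \<longleftrightarrow>
     (\<forall>u. u \<noteq> [] \<longrightarrow> g u > 0) \<and>
     (\<forall>u v. u \<noteq> [] \<longrightarrow> v \<noteq> [] \<longrightarrow> g u + g v \<ge> g (u @ v))"

definition increasing_gap :: "('a list \<Rightarrow> real) \<Rightarrow> bool" where
  "increasing_gap g \<longleftrightarrow> (\<forall>u v x. u @ v \<noteq> [] \<longrightarrow> g (u @ x @ v) \<ge> g (u @ v))"

definition gap_CL :: "('a list \<Rightarrow> real) \<Rightarrow> bool" where
  "gap_CL g \<longleftrightarrow> gap_penalty g \<and> increasing_gap g \<and>
     (\<exists>(\<phi>::'a \<Rightarrow> real) (\<psi>::nat \<Rightarrow> real).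
        \<forall>z. z \<noteq> [] \<longrightarrow> g z = sum_list (map \<phi> z) + \<psi> (length z))"

function glob_sim :: "('a \<Rightarrow> 'a \<Rightarrow> real) \<Rightarrow> ('a list \<Rightarrow> real) \<Rightarrow> ('a list \<Rightarrow> real)
    \<Rightarrow> 'a list \<Rightarrow> 'a list \<Rightarrow> real" where
  "glob_sim s g dl xs ys =
    (if xs = [] \<and> ys = [] then 0
     else if xs = [] then - g ys
     else if ys = [] then - dl xs
     else Max ({glob_sim s g dl (butlast xs) (butlast ys) + s (last xs) (last ys)}
       \<union> (\<lambda>k. glob_sim s g dl xs (take (length ys - k) ys) - g (drop (length ys - k) ys))
            ` {1..length ys}
       \<union> (\<lambda>k. glob_sim s g dl (take (length xs - k) xs) ys - dl (drop (length xs - k) xs))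
            ` {1..length xs}))"
  by pat_completeness auto
termination
  apply (relation "measure (\<lambda>(s, g, dl, xs, ys). length xs + length ys)")
  apply simp
  apply (auto simp: min_def intro!: add_less_mono)
  done

function lp_edit :: "real \<Rightarrow> ('a \<Rightarrow> 'a \<Rightarrow> real) \<Rightarrow> ('a list \<Rightarrow> real) \<Rightarrow> ('a list \<Rightarrow> real)
    \<Rightarrow> 'a list \<Rightarrow> 'a list \<Rightarrow> real" where
  "lp_edit p d al be xs ys =
    (if xs = [] \<and> ys = [] then 0
     else if xs = [] then al ys
     else if ys = [] then be xs
     else (Min ({lp_edit p d al be (butlast xs) (butlast ys) powr p + d (last xs) (last ys) powr p}
       \<union> (\<lambda>k. lp_edit p d al be xs (take (length ys - k) ys) powr p
               + al (drop (length ys - k) ys) powr p) ` {1..length ys}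
       \<union> (\<lambda>k. lp_edit p d al be (take (length xs - k) xs) ys powr p
               + be (drop (length xs - k) xs) powr p) ` {1..length xs})) powr (1 / p))"
  by pat_completeness auto
termination
  apply (relation "measure (\<lambda>(p, d, al, be, xs, ys). length xs + length ys)")
  apply simp
  apply (auto simp: min_def intro!: add_less_mono)
  done

definition score_dist :: "real \<Rightarrow> ('a \<Rightarrow> 'a \<Rightarrow> real) \<Rightarrow> 'a \<Rightarrow> 'a \<Rightarrow> real" where
  "score_dist p s a b = (s a a - s a b) powr (1 / p)"

end

theory Submission
  imports Defs "HOL-Analysis.Convex"
begin


lemma cvx_pt:
  fixes p t x y :: real
  assumes p: "1 \<le> p" and t: "0 \<le> t" "t \<le> 1" and x: "0 \<le> x" and y: "0 \<le> y"
  shows "((1 - t) * x + t * y) powr p \<le> (1 - t) * x powr p + t * y powr p"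
proof (cases "x = 0 \<or> y = 0")
  case False
  then have "x \<in> {0<..}" "y \<in> {0<..}" using x y by auto
  from convex_onD[OF powr_convex[OF p] t this]
  show ?thesis by simp
next
  case True
  have key: "u powr p \<le> u" if "0 \<le> u" "u \<le> 1" for u :: real
  proof -
    have "u powr p \<le> u powr 1" using that p
      using powr_mono'[of 1 p u] by simp
    then show ?thesis using that by simp
  qed
  show ?thesis
  proof (cases "x = 0")
    case True
    have "(t * y) powr p = t powr p * y powr p" using t y by (simp add: powr_mult)
    also have "\<dots> \<le> t * y powr p" using key[OF t] by (simp add: mult_right_mono)
    finally show ?thesis using True p by simp
  next
    case False
    with True have "y = 0" by auto
    have "((1 - t) * x) powr p = (1 - t) powr p * x powr p" using t x by (simp add: powr_mult)
    also have "\<dots> \<le> (1 - t) * x powr p" using key[of "1 - t"] t by (simp add: mult_right_mono)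
    finally show ?thesis using \<open>y = 0\<close> p by simp
  qed
qed

lemma minkowski2:
  fixes p A B a b :: real
  assumes p: "1 \<le> p" and nn: "0 \<le> A" "0 \<le> B" "0 \<le> a" "0 \<le> b"
  shows "((A + B) powr p + (a + b) powr p) powr (1 / p)
      \<le> (A powr p + a powr p) powr (1 / p) + (B powr p + b powr p) powr (1 / p)"
proof -
  define N1 where "N1 = (A powr p + a powr p) powr (1 / p)"
  define N2 where "N2 = (B powr p + b powr p) powr (1 / p)"
  have pp: "p > 0" using p by simp
  have N1p: "N1 powr p = A powr p + a powr p" unfolding N1_def powr_powr using pp by simp
  have N2p: "N2 powr p = B powr p + b powr p" unfolding N2_def powr_powr using pp by simp
  have N1nn: "N1 \<ge> 0" "N2 \<ge> 0" unfolding N1_def N2_def by auto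
  show ?thesis
  proof (cases "N1 = 0 \<or> N2 = 0")
    case True
    then show ?thesis
    proof
      assume "N1 = 0"
      then have "A powr p + a powr p = 0" using N1p pp by simp
      then have "A = 0" "a = 0" using nn by (auto simp: add_nonneg_eq_0_iff)
      then show ?thesis by (simp add: N1_def[symmetric])
    next
      assume "N2 = 0"
      then have "B powr p + b powr p = 0" using N2p pp by simp
      then have "B = 0" "b = 0" using nn by (auto simp: add_nonneg_eq_0_iff)
      then show ?thesis by simp
    qed
  next
    case False
    then have pos: "N1 > 0" "N2 > 0" using N1nn by auto
    define t where "t = N2 / (N1 + N2)"
    have t: "0 \<le> t" "t \<le> 1" "1 - t = N1 / (N1 + N2)" using pos by (auto simp: t_def field_simps)
    have dec: "X + Y = (N1 + N2) * ((1 - t) * (X / N1) + t * (Y / N2))" for X Y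
    proof -
      have "(1 - t) * (X / N1) + t * (Y / N2) = (X + Y) / (N1 + N2)"
      proof -
        have e1: "N1/(N1+N2) * (X/N1) = X/(N1+N2)" using pos by simp
        have e2: "N2/(N1+N2) * (Y/N2) = Y/(N1+N2)" using pos by simp
        show ?thesis unfolding t(3) unfolding t_def e1 e2 by (simp add: add_divide_distrib)
      qed
      then show ?thesis using pos by simp
    qed
    have c1: "(A + B) powr p \<le> (N1 + N2) powr p * ((1 - t) * (A / N1) powr p + t * (B / N2) powr p)"
    proof -
      have "(A + B) powr p = (N1 + N2) powr p * ((1 - t) * (A / N1) + t * (B / N2)) powr p"
        by (subst dec) (use pos t nn in \<open>simp add: powr_mult\<close>)
      also have "\<dots> \<le> (N1 + N2) powr p * ((1 - t) * (A / N1) powr p + t * (B / N2) powr p)"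
        by (rule mult_left_mono[OF cvx_pt[OF p t(1,2)]]) (use pos nn in auto)
      finally show ?thesis .
    qed
    have c2: "(a + b) powr p \<le> (N1 + N2) powr p * ((1 - t) * (a / N1) powr p + t * (b / N2) powr p)"
    proof -
      have "(a + b) powr p = (N1 + N2) powr p * ((1 - t) * (a / N1) + t * (b / N2)) powr p"
        by (subst dec) (use pos t nn in \<open>simp add: powr_mult\<close>)
      also have "\<dots> \<le> (N1 + N2) powr p * ((1 - t) * (a / N1) powr p + t * (b / N2) powr p)"
        by (rule mult_left_mono[OF cvx_pt[OF p t(1,2)]]) (use pos nn in auto)
      finally show ?thesis .
    qed
    have s: "(1 - t) * (A / N1) powr p + t * (B / N2) powr p + ((1 - t) * (a / N1) powr p + t * (b / N2) powr p)
        = (1 - t) * ((A powr p + a powr p) / N1 powr p) + t * ((B powr p + b powr p) / N2 powr p)"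
      by (simp add: powr_divide nn pos less_imp_le add_divide_distrib diff_divide_distrib algebra_simps)
    also have "\<dots> = 1" using pos pp by (simp add: N1p[symmetric] N2p[symmetric])
    finally have s1: "(1 - t) * (A / N1) powr p + t * (B / N2) powr p + ((1 - t) * (a / N1) powr p + t * (b / N2) powr p) = 1" .
    have "(A + B) powr p + (a + b) powr p \<le> (N1 + N2) powr p * 1"
      using add_mono[OF c1 c2] s1 by (simp add: distrib_left[symmetric])
    then have "((A + B) powr p + (a + b) powr p) powr (1 / p) \<le> ((N1 + N2) powr p) powr (1 / p)"
      by (intro powr_mono2) (use pp in auto)
    also have "\<dots> = N1 + N2" using pp pos by (simp add: powr_powr)
    finally show ?thesis unfolding N1_def N2_def .
  qed
qed

lemma mink_app:
  fixes p A B a b X P Q :: real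
  assumes p: "1 \<le> p" and nn: "0 \<le> A" "0 \<le> B" "0 \<le> a" "0 \<le> b" "0 \<le> X"
    and X: "X \<le> (A + B) powr p + (a + b) powr p"
    and P: "A powr p + a powr p \<le> P" and Q: "B powr p + b powr p \<le> Q"
  shows "X powr (1 / p) \<le> P powr (1 / p) + Q powr (1 / p)"
proof -
  have pp: "p > 0" using p by simp
  have "X powr (1 / p) \<le> ((A + B) powr p + (a + b) powr p) powr (1 / p)"
    by (rule powr_mono2) (use pp X nn in auto)
  also have "\<dots> \<le> (A powr p + a powr p) powr (1 / p) + (B powr p + b powr p) powr (1 / p)"
    by (rule minkowski2[OF p nn(1-4)])
  also have "\<dots> \<le> P powr (1 / p) + Q powr (1 / p)"
    by (intro add_mono powr_mono2) (use pp P Q in auto)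
  finally show ?thesis .
qed



declare lp_edit.simps[simp del] glob_sim.simps[simp del]

definition pw :: "real \<Rightarrow> ('a list \<Rightarrow> real) \<Rightarrow> 'a list \<Rightarrow> real" where
  "pw p f w = (if w = [] then 0 else f w powr p)"

definition dsum :: "real \<Rightarrow> ('a \<Rightarrow> 'a \<Rightarrow> real) \<Rightarrow> 'a list \<Rightarrow> 'a list \<Rightarrow> real" where
  "dsum p d r t = sum_list (map2 (\<lambda>a b. d a b powr p) r t)"

definition lpF where "lpF p d al be x y = lp_edit p d al be x y powr p"

definition Fset where
  "Fset p d al be x y =
     {lpF p d al be (butlast x) (butlast y) + d (last x) (last y) powr p}
       \<union> (\<lambda>k. lpF p d al be x (take (length y - k) y) + al (drop (length y - k) y) powr p) ` {1..length y}
       \<union> (\<lambda>k. lpF p d al be (take (length x - k) x) y + be (drop (length x - k) x) powr p) ` {1..length x}"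

lemma lp_nil_nil[simp]: "lp_edit p d al be [] [] = 0"
  by (subst lp_edit.simps) simp

lemma lp_nil1: "y \<noteq> [] \<Longrightarrow> lp_edit p d al be [] y = al y"
  by (subst lp_edit.simps) simp

lemma lp_nil2: "x \<noteq> [] \<Longrightarrow> lp_edit p d al be x [] = be x"
  by (subst lp_edit.simps) simp

lemma lp_rec: "x \<noteq> [] \<Longrightarrow> y \<noteq> [] \<Longrightarrow> lp_edit p d al be x y = Min (Fset p d al be x y) powr (1 / p)"
  by (subst lp_edit.simps) (simp add: Fset_def lpF_def)

lemma Fset_fin: "finite (Fset p d al be x y)" by (simp add: Fset_def)
lemma Fset_ne: "Fset p d al be x y \<noteq> {}" by (simp add: Fset_def)
lemma Fset_nn: "e \<in> Fset p d al be x y \<Longrightarrow> 0 \<le> e" by (auto simp: Fset_def lpF_def)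

lemma dsum_nn: "0 \<le> dsum p d r t"
  unfolding dsum_def by (rule sum_list_nonneg) auto

lemma dsum_flip: "dsum p (\<lambda>a b. d b a) t r = dsum p d r t"
proof (induction r arbitrary: t)
  case Nil then show ?case by (simp add: dsum_def)
next
  case (Cons a r) then show ?case by (cases t) (auto simp: dsum_def)
qed

lemma dsum_Cons: "dsum p d (a # r) (b # t) = d a b powr p + dsum p d r t"
  by (simp add: dsum_def)

lemma lp_flip: "lp_edit p d al be x y = lp_edit p (\<lambda>a b. d b a) be al y x"
proof (induction "length x + length y" arbitrary: x y rule: less_induct)
  case less
  show ?case
  proof (cases "x = [] \<or> y = []")
    case True
    then show ?thesis by (cases "x = []"; cases "y = []") (auto simp: lp_nil1 lp_nil2)
  next
    case False
    then have ne: "x \<noteq> []" "y \<noteq> []" by auto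
    have IH: "lpF p d al be x' y' = lpF p (\<lambda>a b. d b a) be al y' x'"
      if "length x' + length y' < length x + length y" for x' y'
      using less that by (simp add: lpF_def)
    have l1: "length (butlast x) + length (butlast y) < length x + length y" using ne by (cases x; cases y) auto
    have "Fset p d al be x y = Fset p (\<lambda>a b. d b a) be al y x"
    proof -
      have A: "(\<lambda>k. lpF p d al be x (take (length y - k) y) + al (drop (length y - k) y) powr p) ` {1..length y}
        = (\<lambda>k. lpF p (\<lambda>a b. d b a) be al (take (length y - k) y) x + al (drop (length y - k) y) powr p) ` {1..length y}"
        by (rule image_cong[OF refl]) (use ne in \<open>simp add: IH\<close>)
      have B: "(\<lambda>k. lpF p d al be (take (length x - k) x) y + be (drop (length x - k) x) powr p) ` {1..length x}
        = (\<lambda>k. lpF p (\<lambda>a b. d b a) be al y (take (length x - k) x) + be (drop (length x - k) x) powr p) ` {1..length x}"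
        by (rule image_cong[OF refl]) (use ne in \<open>simp add: IH\<close>)
      show ?thesis unfolding Fset_def A B IH[OF l1] by auto
    qed
    then show ?thesis using ne by (simp add: lp_rec)
  qed
qed

lemma lpF_flip: "lpF p d al be x y = lpF p (\<lambda>a b. d b a) be al y x"
  unfolding lpF_def by (subst lp_flip) simp

lemma Fset_flip_pw: "pw p al w = pw p al w" ..

locale lpe =
  fixes p :: real and d :: "'a \<Rightarrow> 'a \<Rightarrow> real" and al be :: "'a list \<Rightarrow> real"
  assumes p1: "1 \<le> p"
    and d_nn: "0 \<le> d a b"
    and d_tri: "d a c \<le> d a b + d b c"
    and al_pos: "w \<noteq> [] \<Longrightarrow> 0 < al w"
    and be_pos: "w \<noteq> [] \<Longrightarrow> 0 < be w"
    and al_sub: "pw p al (x @ y) \<le> pw p al x + pw p al y"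
    and be_sub: "pw p be (x @ y) \<le> pw p be x + pw p be y"
    and al_inc: "pw p al (u @ v) \<le> pw p al (u @ x @ v)"
    and be_inc: "pw p be (u @ v) \<le> pw p be (u @ x @ v)"
    and al_swap: "pw p al (x @ y) = pw p al (y @ x)"
    and be_swap: "pw p be (x @ y) = pw p be (y @ x)"
    and al_lip: "length r = length t \<Longrightarrow> pw p al t \<le> pw p al r + dsum p d r t"
    and be_lip: "length r = length t \<Longrightarrow> pw p be r \<le> pw p be t + dsum p d r t"
begin

abbreviation "D \<equiv> lp_edit p d al be"
abbreviation "F \<equiv> lpF p d al be"

lemma pp: "0 < p" using p1 by simp

lemma flip_inst: "lpe p (\<lambda>a b. d b a) be al"
  apply unfold_locales
  subgoal by (rule p1)
  subgoal by (rule d_nn)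
  subgoal for a b c using d_tri[of b a c] by linarith
  subgoal by (rule be_pos)
  subgoal by (rule al_pos)
  subgoal by (rule be_sub)
  subgoal by (rule al_sub)
  subgoal by (rule be_inc)
  subgoal by (rule al_inc)
  subgoal by (rule be_swap)
  subgoal by (rule al_swap)
  subgoal for r t using be_lip[of t r] dsum_flip[of p d r t] by simp
  subgoal for r t using al_lip[of t r] dsum_flip[of p d r t] by simp
  done

lemma D_nn: "0 \<le> D x y"
proof -
  consider "x = []" "y = []" | "x = []" "y \<noteq> []" | "x \<noteq> []" "y = []" | "x \<noteq> []" "y \<noteq> []" by blast
  then show ?thesis
  proof cases
    case 2 then show ?thesis using al_pos[of y] by (simp add: lp_nil1)
  next
    case 3 then show ?thesis using be_pos[of x] by (simp add: lp_nil2)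
  next
    case 4 then show ?thesis by (simp add: lp_rec)
  qed simp
qed

lemma F_nn: "0 \<le> F x y" by (simp add: lpF_def)

lemma D_F: "D x y = F x y powr (1 / p)"
  using D_nn[of x y] pp by (simp add: lpF_def powr_powr)

lemma F_nil1: "F [] y = pw p al y"
  by (cases "y = []") (auto simp: lpF_def pw_def lp_nil1)

lemma F_nil2: "F x [] = pw p be x"
  by (cases "x = []") (auto simp: lpF_def pw_def lp_nil2)

lemma F_rec: "x \<noteq> [] \<Longrightarrow> y \<noteq> [] \<Longrightarrow> F x y = Min (Fset p d al be x y)"
proof -
  assume ne: "x \<noteq> []" "y \<noteq> []"
  have "0 \<le> Min (Fset p d al be x y)"
    using Fset_nn Fset_fin Fset_ne Min_in by metis
  then show ?thesis using ne pp by (simp add: lpF_def lp_rec powr_powr)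
qed

lemma pw_nn: "0 \<le> pw p f w" by (simp add: pw_def)

lemma pw_root: "(pw p f w powr (1 / p)) powr p = pw p f w"
  using pp by (simp add: powr_powr pw_nn)

lemma al_pw: "w \<noteq> [] \<Longrightarrow> al w powr p = pw p al w" by (simp add: pw_def)
lemma be_pw: "w \<noteq> [] \<Longrightarrow> be w powr p = pw p be w" by (simp add: pw_def)

lemma al_pw_pos: "w \<noteq> [] \<Longrightarrow> 0 < pw p al w" using al_pos[of w] by (simp add: pw_def)
lemma be_pw_pos: "w \<noteq> [] \<Longrightarrow> 0 < pw p be w" using be_pos[of w] by (simp add: pw_def)

lemma cls:
  assumes "x \<noteq> [] \<or> y \<noteq> []"
  shows "(\<exists>x' y' a b. x = x' @ [a] \<and> y = y' @ [b] \<and> F x y = F x' y' + d a b powr p)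
       \<or> (\<exists>y' u. u \<noteq> [] \<and> y = y' @ u \<and> F x y = F x y' + pw p al u)
       \<or> (\<exists>x' w. w \<noteq> [] \<and> x = x' @ w \<and> F x y = F x' y + pw p be w)"
proof (cases "x = []")
  case True
  then have yne: "y \<noteq> []" using assms by simp
  have e: "F x y = F x [] + pw p al y" using True by (simp add: F_nil1 F_nil2 pw_def)
  show ?thesis
    apply (rule disjI2, rule disjI1)
    apply (rule exI[of _ "[]"], rule exI[of _ y])
    using e yne by simp
next
  case xne: False
  show ?thesis
  proof (cases "y = []")
    case True
    have e: "F x y = F [] y + pw p be x" using xne True by (simp add: F_nil1 F_nil2 pw_def)
    show ?thesis
      apply (intro disjI2)
      apply (rule exI[of _ "[]"], rule exI[of _ x])
      using e xne by simp
  next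
    case yne: False
    have "F x y \<in> Fset p d al be x y" using F_rec[OF xne yne] Min_in Fset_fin Fset_ne by metis
    then consider
      (M) "F x y = F (butlast x) (butlast y) + d (last x) (last y) powr p"
    | (I) k where "k \<in> {1..length y}" "F x y = F x (take (length y - k) y) + al (drop (length y - k) y) powr p"
    | (Dl) k where "k \<in> {1..length x}" "F x y = F (take (length x - k) x) y + be (drop (length x - k) x) powr p"
      unfolding Fset_def by blast
    then show ?thesis
    proof cases
      case M
      show ?thesis
        apply (rule disjI1)
        apply (rule exI[of _ "butlast x"], rule exI[of _ "butlast y"], rule exI[of _ "last x"], rule exI[of _ "last y"])
        using M xne yne by simp
    next
      case (I k)
      then have ne: "drop (length y - k) y \<noteq> []" by auto
      show ?thesis
        apply (rule disjI2, rule disjI1)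
        apply (rule exI[of _ "take (length y - k) y"], rule exI[of _ "drop (length y - k) y"])
        using I ne by (simp add: al_pw)
    next
      case (Dl k)
      then have ne: "drop (length x - k) x \<noteq> []" by auto
      show ?thesis
        apply (intro disjI2)
        apply (rule exI[of _ "take (length x - k) x"], rule exI[of _ "drop (length x - k) x"])
        using Dl ne by (simp add: be_pw)
    qed
  qed
qed

lemma U1: "F (x @ [a]) (y @ [b]) \<le> F x y + d a b powr p"
proof -
  have "F x y + d a b powr p \<in> Fset p d al be (x @ [a]) (y @ [b])" by (simp add: Fset_def)
  then show ?thesis by (simp add: F_rec Fset_fin)
qed

lemma U2: "F x (y @ w) \<le> F x y + pw p al w"
proof (cases "w = []")
  case True then show ?thesis by (simp add: pw_def)
next
  case wne: False
  show ?thesis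
  proof (cases "x = []")
    case True then show ?thesis using al_sub by (simp add: F_nil1)
  next
    case False
    have "length w \<in> {1..length (y @ w)}" using wne by (cases w) auto
    then have "F x y + al w powr p \<in> Fset p d al be x (y @ w)"
      unfolding Fset_def by (intro UnI1 UnI2) (force intro: image_eqI[where x="length w"])
    then show ?thesis using False wne by (simp add: F_rec Fset_fin al_pw)
  qed
qed

end



context lpe
begin

lemma U3: "F (x @ w) y \<le> F x y + pw p be w"
proof -
  have "lpF p (\<lambda>a b. d b a) be al y (x @ w) \<le> lpF p (\<lambda>a b. d b a) be al y x + pw p be w"
    by (rule lpe.U2[OF flip_inst])
  then show ?thesis
    unfolding lpF_flip[of p d al be "x @ w" y] lpF_flip[of p d al be x y] .
qed

lemma F00: "F [] [] = 0" by (simp add: F_nil1 pw_def)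

lemma DpF: "D a b powr p = F a b" by (simp add: lpF_def)

lemma F_le: "D u v \<le> c \<Longrightarrow> F u v \<le> c powr p"
  unfolding DpF[symmetric] by (rule powr_mono2) (use pp D_nn in auto)

lemma lipC: "length r = length t \<Longrightarrow> pw p al (w @ t) \<le> pw p al (u @ r) + F u w + dsum p d r t"
proof (induction "length u + length w" arbitrary: u w r t rule: less_induct)
  case less
  show ?case
  proof (cases "u = [] \<and> w = []")
    case True then show ?thesis using al_lip[OF less.prems] F00 by simp
  next
    case False
    then have "u \<noteq> [] \<or> w \<noteq> []" by simp
    from cls[OF this] consider
      (M) u' w' a b where "u = u' @ [a]" "w = w' @ [b]" "F u w = F u' w' + d a b powr p"
    | (I) w' v where "v \<noteq> []" "w = w' @ v" "F u w = F u w' + pw p al v"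
    | (Dl) u' v where "v \<noteq> []" "u = u' @ v" "F u w = F u' w + pw p be v"
      by blast
    then show ?thesis
    proof cases
      case M
      have "pw p al (w' @ (b # t)) \<le> pw p al (u' @ (a # r)) + F u' w' + dsum p d (a # r) (b # t)"
        by (rule less.hyps) (use M less.prems in auto)
      then show ?thesis using M by (simp add: dsum_Cons)
    next
      case I
      have h: "pw p al (w' @ t) \<le> pw p al (u @ r) + F u w' + dsum p d r t"
        by (rule less.hyps) (use I less.prems in auto)
      have "pw p al (w @ t) = pw p al (w' @ (v @ t))" using I by simp
      also have "\<dots> = pw p al (v @ (t @ w'))" using al_swap[of w' "v @ t"] by simp
      also have "\<dots> \<le> pw p al v + pw p al (t @ w')" by (rule al_sub)
      also have "pw p al (t @ w') = pw p al (w' @ t)" by (rule al_swap)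
      finally show ?thesis using h I by simp
    next
      case Dl
      have h: "pw p al (w @ t) \<le> pw p al (u' @ r) + F u' w + dsum p d r t"
        by (rule less.hyps) (use Dl less.prems in auto)
      have "pw p al (u' @ r) \<le> pw p al (u' @ v @ r)" by (rule al_inc)
      then show ?thesis using h Dl pw_nn[of be v] by simp
    qed
  qed
qed

lemma Lip_al: "pw p al w powr (1 / p) \<le> pw p al u powr (1 / p) + D u w"
proof -
  have X: "pw p al w \<le> pw p al u + F u w" using lipC[where r="[]" and t="[]" and w=w and u=u] by (simp add: dsum_def)
  have "pw p al w powr (1 / p) \<le> (pw p al u) powr (1 / p) + (F u w) powr (1 / p)"
    apply (rule mink_app[OF p1, of "pw p al u powr (1 / p)" 0 0 "D u w"])
    using X pp D_nn[of u w] by (auto simp: pw_root pw_nn DpF)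
  then show ?thesis by (simp add: D_F)
qed

lemma Lip_be: "pw p be w powr (1 / p) \<le> pw p be u powr (1 / p) + D w u"
  using lpe.Lip_al[OF flip_inst, of w u] lp_flip[of p d al be w u] by simp

lemma split: "\<exists>j u2 v. j \<le> length z \<and> y2 = v @ u2
    \<and> F y1 (take j z) + F u2 (drop j z) \<le> F (y1 @ y2) z"
proof (induction "length y2 + length z" arbitrary: y2 z rule: less_induct)
  case less
  show ?case
  proof (cases "y2 = []")
    case True
    show ?thesis
      apply (rule exI[of _ "length z"], rule exI[of _ "[]"], rule exI[of _ "[]"])
      using True by (simp add: F00)
  next
    case y2ne: False
    then have "y1 @ y2 \<noteq> [] \<or> z \<noteq> []" by simp
    from cls[OF this] consider
      (M) X' z' a c where "y1 @ y2 = X' @ [a]" "z = z' @ [c]" "F (y1 @ y2) z = F X' z' + d a c powr p"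
    | (I) z' v where "v \<noteq> []" "z = z' @ v" "F (y1 @ y2) z = F (y1 @ y2) z' + pw p al v"
    | (Dl) X' w where "w \<noteq> []" "y1 @ y2 = X' @ w" "F (y1 @ y2) z = F X' z + pw p be w"
      by blast
    then show ?thesis
    proof cases
      case M
      have e1: "X' = y1 @ butlast y2" "a = last y2"
        using arg_cong[OF M(1), of butlast] arg_cong[OF M(1), of last] y2ne
        by (simp_all add: butlast_append last_append)
      have y2e: "y2 = butlast y2 @ [a]" using e1 y2ne by simp
      obtain j u2 v where j: "j \<le> length z'" "butlast y2 = v @ u2"
        "F y1 (take j z') + F u2 (drop j z') \<le> F (y1 @ butlast y2) z'"
      proof -
        have lt: "length (butlast y2) + length z' < length y2 + length z" using M(2) y2ne by (cases y2) auto
        show ?thesis using less.hyps[OF lt] that by blast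
      qed
      have "F (u2 @ [a]) (drop j z' @ [c]) \<le> F u2 (drop j z') + d a c powr p" by (rule U1)
      note uu = this
      show ?thesis
        apply (rule exI[of _ j], rule exI[of _ "u2 @ [a]"], rule exI[of _ v])
        using uu j M e1 y2e by (simp add: drop_append take_append)
    next
      case I
      obtain j u2 v0 where j: "j \<le> length z'" "y2 = v0 @ u2"
        "F y1 (take j z') + F u2 (drop j z') \<le> F (y1 @ y2) z'"
        using less.hyps[of y2 z'] I by auto
      have "F u2 (drop j z' @ v) \<le> F u2 (drop j z') + pw p al v" by (rule U2)
      note uu = this
      show ?thesis
        apply (rule exI[of _ j], rule exI[of _ u2], rule exI[of _ v0])
        using uu j I by (simp add: drop_append take_append)
    next
      case Dl
      show ?thesis
      proof (cases "length w \<le> length y2")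
        case True
        then have le: "length y1 \<le> length X'" using arg_cong[OF Dl(2), of length] by simp
        then have e: "y1 = take (length y1) X'" "y2 = drop (length y1) X' @ w"
          using Dl(2) by (simp_all add: append_eq_append_conv_if)
        define y2' where "y2' = drop (length y1) X'"
        have X'e: "X' = y1 @ y2'" unfolding y2'_def using e(1) by (metis append_take_drop_id)
        obtain j u2 v0 where j: "j \<le> length z" "y2' = v0 @ u2"
          "F y1 (take j z) + F u2 (drop j z) \<le> F (y1 @ y2') z"
          using less.hyps[of y2' z] e(2) Dl(1) unfolding y2'_def by fastforce
        have "F (u2 @ w) (drop j z) \<le> F u2 (drop j z) + pw p be w" by (rule U3)
        note uu = this
        show ?thesis
          apply (rule exI[of _ j], rule exI[of _ "u2 @ w"], rule exI[of _ v0])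
          using uu j Dl X'e e(2) unfolding y2'_def[symmetric] by simp
      next
        case False
        then have le: "\<not> length y1 \<le> length X'" using arg_cong[OF Dl(2), of length] by simp
        then have e: "take (length X') y1 = X'" "drop (length X') y1 @ y2 = w"
          using Dl(2) by (simp_all add: append_eq_append_conv_if)
        define v1 where "v1 = drop (length X') y1"
        have y1e: "y1 = X' @ v1" unfolding v1_def using e(1) by (metis append_take_drop_id)
        have "F y1 z \<le> F X' z + pw p be v1" using U3[of X' v1 z] y1e by simp
        also have "pw p be v1 \<le> pw p be w" using be_inc[of v1 "[]" y2] e(2) unfolding v1_def by simp
        finally have "F y1 z \<le> F X' z + pw p be w" by simp
        note uu = this
        show ?thesis
          apply (rule exI[of _ "length z"], rule exI[of _ "[]"], rule exI[of _ y2])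
          using uu Dl by (simp add: F00)
      qed
    qed
  qed
qed

lemma split2: "\<exists>i v2 v. i \<le> length x \<and> y2 = v @ v2
    \<and> F (take i x) y1 + F (drop i x) v2 \<le> F x (y1 @ y2)"
proof -
  obtain i v2 v where "i \<le> length x" "y2 = v @ v2"
    "lpF p (\<lambda>a b. d b a) be al y1 (take i x) + lpF p (\<lambda>a b. d b a) be al v2 (drop i x)
       \<le> lpF p (\<lambda>a b. d b a) be al (y1 @ y2) x"
    using lpe.split[OF flip_inst, of x y2 y1] by blast
  then show ?thesis
    unfolding lpF_flip[of p d al be "take i x" y1, symmetric] lpF_flip[of p d al be "drop i x" v2, symmetric]
      lpF_flip[of p d al be x "y1 @ y2", symmetric] by blast
qed

end



context lpe
begin

lemma step:
  assumes X: "F x z \<le> (A + B) powr p + (a + b) powr p"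
    and nn: "0 \<le> A" "0 \<le> B" "0 \<le> a" "0 \<le> b"
    and P: "A powr p + a powr p \<le> F x y" and Q: "B powr p + b powr p \<le> F y z"
  shows "D x z \<le> D x y + D y z"
  using mink_app[OF p1 nn F_nn X P Q] by (simp add: D_F)

lemma pw_rt: "pw p f w = (pw p f w powr (1 / p)) powr p" by (simp add: pw_root)

lemma zp: "(0::real) powr p = 0" by simp

lemma tri: "D x z \<le> D x y + D y z"
proof (induction "length x + length y + length z" arbitrary: x y z rule: less_induct)
  case less
  show ?case
  proof (cases "x = [] \<and> y = []")
    case True then show ?thesis by simp
  next
    case False
    then have "x \<noteq> [] \<or> y \<noteq> []" by simp
    from cls[OF this] consider
      (M) x' y' a b where "x = x' @ [a]" "y = y' @ [b]" "F x y = F x' y' + d a b powr p"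
    | (I) y' u where "u \<noteq> []" "y = y' @ u" "F x y = F x y' + pw p al u"
    | (Dl) x' w where "w \<noteq> []" "x = x' @ w" "F x y = F x' y + pw p be w"
      by blast
    then show ?thesis
    proof cases
      case Dl
      have ih: "D x' z \<le> D x' y + D y z" by (rule less.hyps) (use Dl in auto)
      show ?thesis
      proof (rule step[of _ _ "D x' y" "D y z" "pw p be w powr (1 / p)" 0])
        have "F x z \<le> F x' z + pw p be w" using U3[of x' w z] Dl by simp
        also have "\<dots> \<le> (D x' y + D y z) powr p + (pw p be w powr (1 / p) + 0) powr p"
          using F_le[OF ih] by (simp add: pw_root)
        finally show "F x z \<le> (D x' y + D y z) powr p + (pw p be w powr (1 / p) + 0) powr p" .
        show "D x' y powr p + (pw p be w powr (1 / p)) powr p \<le> F x y"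
          using Dl by (simp add: DpF pw_root)
        show "D y z powr p + 0 powr p \<le> F y z" by (simp add: DpF)
      qed (auto simp: D_nn)
    next
      case I
      obtain j u2 v where j: "j \<le> length z" "u = v @ u2"
        "F y' (take j z) + F u2 (drop j z) \<le> F (y' @ u) z"
        using split[of z u y'] by blast
      have lt: "length x + length y' + length (take j z) < length x + length y + length z"
        using I(1,2) j(1) by (cases u) auto
      have ih: "D x (take j z) \<le> D x y' + D y' (take j z)"
        by (rule less.hyps[OF lt])
      have lip: "pw p al (drop j z) powr (1 / p) \<le> pw p al u powr (1 / p) + D u2 (drop j z)"
      proof -
        have "pw p al u2 \<le> pw p al u" using al_inc[of "[]" u2 v] j(2) by simp
        then have "pw p al u2 powr (1 / p) \<le> pw p al u powr (1 / p)"
          using powr_mono2[of "1 / p" "pw p al u2" "pw p al u"] pp pw_nn[of al u2] by simp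
        then show ?thesis using Lip_al[of "drop j z" u2] by simp
      qed
      show ?thesis
      proof (rule step[of _ _ "D x y'" "D y' (take j z)" "pw p al u powr (1 / p)" "D u2 (drop j z)"])
        have "F x z \<le> F x (take j z) + pw p al (drop j z)" using U2[of x "take j z" "drop j z"] by simp
        also have "\<dots> \<le> (D x y' + D y' (take j z)) powr p + (pw p al u powr (1 / p) + D u2 (drop j z)) powr p"
        proof (rule add_mono)
          show "F x (take j z) \<le> (D x y' + D y' (take j z)) powr p" by (rule F_le[OF ih])
          have "pw p al (drop j z) = (pw p al (drop j z) powr (1 / p)) powr p" by (rule pw_rt)
          also have "\<dots> \<le> (pw p al u powr (1 / p) + D u2 (drop j z)) powr p"
            by (rule powr_mono2) (use pp lip in auto)
          finally show "pw p al (drop j z) \<le> (pw p al u powr (1 / p) + D u2 (drop j z)) powr p" .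
        qed
        finally show "F x z \<le> (D x y' + D y' (take j z)) powr p + (pw p al u powr (1 / p) + D u2 (drop j z)) powr p" .
        show "D x y' powr p + (pw p al u powr (1 / p)) powr p \<le> F x y"
          using I by (simp add: DpF pw_root)
        show "D y' (take j z) powr p + D u2 (drop j z) powr p \<le> F y z"
          using j I by (simp add: DpF)
      qed (auto simp: D_nn)
    next
      case M
      then have "y \<noteq> [] \<or> z \<noteq> []" by simp
      from cls[OF this] consider
        (M2) y2 z' b2 c where "y = y2 @ [b2]" "z = z' @ [c]" "F y z = F y2 z' + d b2 c powr p"
      | (I2) z' v where "v \<noteq> []" "z = z' @ v" "F y z = F y z' + pw p al v"
      | (D2) y'' w where "w \<noteq> []" "y = y'' @ w" "F y z = F y'' z + pw p be w"
        by blast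
      then show ?thesis
      proof cases
        case M2
        then have e: "y2 = y'" "b2 = b" using M(2) by auto
        have ih: "D x' z' \<le> D x' y' + D y' z'" by (rule less.hyps) (use M M2 in auto)
        show ?thesis
        proof (rule step[of _ _ "D x' y'" "D y' z'" "d a b" "d b c"])
          have "F x z \<le> F x' z' + d a c powr p" using U1[of x' a z' c] M M2 by simp
          also have "\<dots> \<le> (D x' y' + D y' z') powr p + (d a b + d b c) powr p"
          proof (rule add_mono)
            show "F x' z' \<le> (D x' y' + D y' z') powr p" by (rule F_le[OF ih])
            show "d a c powr p \<le> (d a b + d b c) powr p"
              by (rule powr_mono2) (use pp d_nn d_tri in auto)
          qed
          finally show "F x z \<le> (D x' y' + D y' z') powr p + (d a b + d b c) powr p" .
          show "D x' y' powr p + d a b powr p \<le> F x y" using M by (simp add: DpF)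
          show "D y' z' powr p + d b c powr p \<le> F y z" using M2 e by (simp add: DpF)
        qed (auto simp: D_nn d_nn)
      next
        case I2
        have ih: "D x z' \<le> D x y + D y z'" by (rule less.hyps) (use I2 in auto)
        show ?thesis
        proof (rule step[of _ _ "D x y" "D y z'" 0 "pw p al v powr (1 / p)"])
          have "F x z \<le> F x z' + pw p al v" using U2[of x z' v] I2 by simp
          also have "\<dots> \<le> (D x y + D y z') powr p + (0 + pw p al v powr (1 / p)) powr p"
            using F_le[OF ih] by (simp add: pw_root)
          finally show "F x z \<le> (D x y + D y z') powr p + (0 + pw p al v powr (1 / p)) powr p" .
          show "D x y powr p + 0 powr p \<le> F x y" by (simp add: DpF)
          show "D y z' powr p + (pw p al v powr (1 / p)) powr p \<le> F y z"
            using I2 by (simp add: DpF pw_root)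
        qed (auto simp: D_nn)
      next
        case D2
        obtain i v2 v where i: "i \<le> length x" "w = v @ v2"
          "F (take i x) y'' + F (drop i x) v2 \<le> F x (y'' @ w)"
          using split2[of x w y''] by blast
        have lt: "length (take i x) + length y'' + length z < length x + length y + length z"
          using D2(1,2) i(1) by (cases w) auto
        have ih: "D (take i x) z \<le> D (take i x) y'' + D y'' z"
          by (rule less.hyps[OF lt])
        have lip: "pw p be (drop i x) powr (1 / p) \<le> D (drop i x) v2 + pw p be w powr (1 / p)"
        proof -
          have "pw p be v2 \<le> pw p be w" using be_inc[of "[]" v2 v] i(2) by simp
          then have "pw p be v2 powr (1 / p) \<le> pw p be w powr (1 / p)"
            using powr_mono2[of "1 / p" "pw p be v2" "pw p be w"] pp pw_nn[of be v2] by simp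
          then show ?thesis using Lip_be[of "drop i x" v2] by simp
        qed
        show ?thesis
        proof (rule step[of _ _ "D (take i x) y''" "D y'' z" "D (drop i x) v2" "pw p be w powr (1 / p)"])
          have "F x z \<le> F (take i x) z + pw p be (drop i x)" using U3[of "take i x" "drop i x" z] by simp
          also have "\<dots> \<le> (D (take i x) y'' + D y'' z) powr p + (D (drop i x) v2 + pw p be w powr (1 / p)) powr p"
          proof (rule add_mono)
            show "F (take i x) z \<le> (D (take i x) y'' + D y'' z) powr p" by (rule F_le[OF ih])
            have "pw p be (drop i x) = (pw p be (drop i x) powr (1 / p)) powr p" by (rule pw_rt)
            also have "\<dots> \<le> (D (drop i x) v2 + pw p be w powr (1 / p)) powr p"
              by (rule powr_mono2) (use pp lip in auto)
            finally show "pw p be (drop i x) \<le> (D (drop i x) v2 + pw p be w powr (1 / p)) powr p" .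
          qed
          finally show "F x z \<le> (D (take i x) y'' + D y'' z) powr p + (D (drop i x) v2 + pw p be w powr (1 / p)) powr p" .
          show "D (take i x) y'' powr p + D (drop i x) v2 powr p \<le> F x y"
            using i D2 by (simp add: DpF)
          show "D y'' z powr p + (pw p be w powr (1 / p)) powr p \<le> F y z"
            using D2 by (simp add: DpF pw_root)
        qed (auto simp: D_nn)
      qed
    qed
  qed
qed

lemma F_zero: "F x y = 0 \<Longrightarrow> list_all2 (\<lambda>a b. d a b = 0) x y"
proof (induction "length x + length y" arbitrary: x y rule: less_induct)
  case less
  show ?case
  proof (cases "x = [] \<and> y = []")
    case True then show ?thesis by simp
  next
    case False
    then have "x \<noteq> [] \<or> y \<noteq> []" by simp
    from cls[OF this] consider
      (M) x' y' a b where "x = x' @ [a]" "y = y' @ [b]" "F x y = F x' y' + d a b powr p"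
    | (I) y' u where "u \<noteq> []" "y = y' @ u" "F x y = F x y' + pw p al u"
    | (Dl) x' w where "w \<noteq> []" "x = x' @ w" "F x y = F x' y + pw p be w"
      by blast
    then show ?thesis
    proof cases
      case M
      then have "F x' y' = 0" "d a b powr p = 0" using less.prems F_nn[of x' y'] powr_ge_zero[of "d a b" p] by linarith+
      then have "list_all2 (\<lambda>a b. d a b = 0) x' y'" "d a b = 0"
        using less.hyps[of x' y'] M by auto
      then show ?thesis using M by (simp add: list_all2_appendI)
    next
      case I
      then show ?thesis using less.prems F_nn[of x y'] al_pw_pos[of u] by linarith
    next
      case Dl
      then show ?thesis using less.prems F_nn[of x' y] be_pw_pos[of w] by linarith
    qed
  qed
qed

lemma F_refl: "(\<And>a. d a a = 0) \<Longrightarrow> F x x = 0"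
proof (induction x rule: rev_induct)
  case Nil then show ?case by (simp add: F00)
next
  case (snoc a x)
  then show ?case using U1[of x a x a] F_nn[of "x @ [a]" "x @ [a]"] by simp
qed

lemma D_qm:
  assumes "\<And>a b. (d a b = 0 \<and> d b a = 0) \<longleftrightarrow> a = b"
  shows "quasi_metric D"
  unfolding quasi_metric_def
proof (intro conjI allI)
  fix x y z
  show "0 \<le> D x y" by (rule D_nn)
  show "D x z \<le> D x y + D y z" by (rule tri)
  have dz: "d a a = 0" for a using assms by blast
  have DF0: "D u v = 0 \<longleftrightarrow> F u v = 0" for u v using pp by (simp add: D_F)
  show "(D x y = 0 \<and> D y x = 0) = (x = y)"
  proof
    assume "D x y = 0 \<and> D y x = 0"
    then have "list_all2 (\<lambda>a b. d a b = 0) x y" "list_all2 (\<lambda>a b. d a b = 0) y x"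
      using F_zero DF0 by auto
    then have l: "length x = length y" and h: "\<And>i. i < length x \<Longrightarrow> d (x ! i) (y ! i) = 0 \<and> d (y ! i) (x ! i) = 0"
      by (auto simp: list_all2_conv_all_nth)
    show "x = y"
    proof (rule nth_equalityI[OF l])
      fix i assume "i < length x"
      then show "x ! i = y ! i" using h assms by blast
    qed
  next
    assume "x = y"
    then show "D x y = 0 \<and> D y x = 0" using F_refl[OF dz] DF0 by auto
  qed
qed

end



definition Sset where
  "Sset s g dl x y =
     {glob_sim s g dl (butlast x) (butlast y) + s (last x) (last y)}
       \<union> (\<lambda>k. glob_sim s g dl x (take (length y - k) y) - g (drop (length y - k) y)) ` {1..length y}
       \<union> (\<lambda>k. glob_sim s g dl (take (length x - k) x) y - dl (drop (length x - k) x)) ` {1..length x}"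

lemma S_nil_nil[simp]: "glob_sim s g dl [] [] = 0"
  by (subst glob_sim.simps) simp

lemma S_nil1: "y \<noteq> [] \<Longrightarrow> glob_sim s g dl [] y = - g y"
  by (subst glob_sim.simps) simp

lemma S_nil2: "x \<noteq> [] \<Longrightarrow> glob_sim s g dl x [] = - dl x"
  by (subst glob_sim.simps) simp

lemma S_rec: "x \<noteq> [] \<Longrightarrow> y \<noteq> [] \<Longrightarrow> glob_sim s g dl x y = Max (Sset s g dl x y)"
  by (subst glob_sim.simps) (simp add: Sset_def)

lemma Sset_fin: "finite (Sset s g dl x y)" by (simp add: Sset_def)
lemma Sset_ne: "Sset s g dl x y \<noteq> {}" by (simp add: Sset_def)

definition Sig :: "('a \<Rightarrow> 'a \<Rightarrow> real) \<Rightarrow> 'a list \<Rightarrow> real" where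
  "Sig s x = sum_list (map (\<lambda>a. s a a) x)"

lemma Sig_append[simp]: "Sig s (x @ y) = Sig s x + Sig s y" by (simp add: Sig_def)
lemma Sig_nil[simp]: "Sig s [] = 0" by (simp add: Sig_def)
lemma Sig_one[simp]: "Sig s [a] = s a a" by (simp add: Sig_def)

lemma Sig_nn: "sane_scoring s \<Longrightarrow> 0 \<le> Sig s x"
  unfolding Sig_def sane_scoring_def by (rule sum_list_nonneg) (auto intro: less_imp_le)

lemma Sig_butlast: "x \<noteq> [] \<Longrightarrow> Sig s x = Sig s (butlast x) + s (last x) (last x)"
  by (metis Sig_append Sig_one append_butlast_last_id)

lemma Sig_take: "Sig s x = Sig s (take n x) + Sig s (drop n x)"
  by (metis Sig_append append_take_drop_id)

lemma S_le:
  assumes sane: "sane_scoring s" and gp: "\<And>w. w \<noteq> [] \<Longrightarrow> 0 < g w" and dp: "\<And>w. w \<noteq> [] \<Longrightarrow> 0 < dl w"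
  shows "glob_sim s g dl x y \<le> Sig s x"
proof (induction "length x + length y" arbitrary: x y rule: less_induct)
  case less
  consider "x = []" "y = []" | "x = []" "y \<noteq> []" | "x \<noteq> []" "y = []" | "x \<noteq> []" "y \<noteq> []" by blast
  then show ?case
  proof cases
    case 2 then show ?thesis using gp[of y] by (simp add: S_nil1)
  next
    case 3 then show ?thesis using dp[of x] Sig_nn[OF sane, of x] by (simp add: S_nil2)
  next
    case 4
    have "\<forall>e \<in> Sset s g dl x y. e \<le> Sig s x"
    proof
      fix e assume "e \<in> Sset s g dl x y"
      then consider
        (M) "e = glob_sim s g dl (butlast x) (butlast y) + s (last x) (last y)"
      | (I) k where "k \<in> {1..length y}" "e = glob_sim s g dl x (take (length y - k) y) - g (drop (length y - k) y)"
      | (Dl) k where "k \<in> {1..length x}" "e = glob_sim s g dl (take (length x - k) x) y - dl (drop (length x - k) x)"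
        unfolding Sset_def by blast
      then show "e \<le> Sig s x"
      proof cases
        case M
        have lt: "length (butlast x) + length (butlast y) < length x + length y" using 4 by (cases x; cases y) auto
        have "s (last x) (last y) \<le> s (last x) (last x)" using sane by (simp add: sane_scoring_def)
        then show ?thesis using M less.hyps[OF lt] Sig_butlast[OF 4(1), of s] by simp
      next
        case (I k)
        have lt: "length x + length (take (length y - k) y) < length x + length y" using I 4 by auto
        have "drop (length y - k) y \<noteq> []" using I by auto
        then show ?thesis using I less.hyps[OF lt] gp[of "drop (length y - k) y"] by simp
      next
        case (Dl k)
        have lt: "length (take (length x - k) x) + length y < length x + length y" using Dl 4 by auto
        have "drop (length x - k) x \<noteq> []" using Dl by auto
        then show ?thesis using Dl less.hyps[OF lt] dp[of "drop (length x - k) x"]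
            Sig_take[of s x "length x - k"] Sig_nn[OF sane, of "drop (length x - k) x"] by simp
      qed
    qed
    then show ?thesis using 4 by (simp add: S_rec Sset_fin Sset_ne)
  qed simp
qed

lemma S_diag:
  assumes sane: "sane_scoring s" and gp: "\<And>w. w \<noteq> [] \<Longrightarrow> 0 < g w" and dp: "\<And>w. w \<noteq> [] \<Longrightarrow> 0 < dl w"
  shows "glob_sim s g dl x x = Sig s x"
proof -
  have "Sig s x \<le> glob_sim s g dl x x"
  proof (induction x rule: rev_induct)
    case Nil then show ?case by simp
  next
    case (snoc a x)
    have "glob_sim s g dl x x + s a a \<in> Sset s g dl (x @ [a]) (x @ [a])" by (simp add: Sset_def)
    then have "glob_sim s g dl x x + s a a \<le> glob_sim s g dl (x @ [a]) (x @ [a])"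
      by (simp add: S_rec Sset_fin)
    then show ?case using snoc by simp
  qed
  then show ?thesis using S_le[where s=s and g=g and dl=dl and x=x and y=x, OF sane gp dp] by simp
qed

lemma min_neg: "finite A \<Longrightarrow> A \<noteq> {} \<Longrightarrow> Min ((\<lambda>e. c - e) ` A) = c - Max A"
  for c :: real
  by (rule Min_eqI) (auto intro: Max_in)



lemma lp_eq:
  assumes p: "1 \<le> p" and sane: "sane_scoring s" and gp: "\<And>w. w \<noteq> [] \<Longrightarrow> 0 < g w"
    and dp: "\<And>w. w \<noteq> [] \<Longrightarrow> 0 < dl w"
  shows "lp_edit p (score_dist p s) (\<lambda>x. g x powr (1 / p)) (\<lambda>x. (glob_sim s g dl x x + dl x) powr (1 / p)) x y
       = (glob_sim s g dl x x - glob_sim s g dl x y) powr (1 / p)"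
proof (induction "length x + length y" arbitrary: x y rule: less_induct)
  case less
  let ?al = "\<lambda>x. g x powr (1 / p)"
  let ?be = "\<lambda>x. (glob_sim s g dl x x + dl x) powr (1 / p)"
  let ?S = "glob_sim s g dl"
  let ?sd = "score_dist p s"
  have pp: "0 < p" using p by simp
  have Sd: "\<And>w. ?S w w = Sig s w" by (rule S_diag[OF sane gp dp])
  have Sle: "\<And>u v. ?S u v \<le> Sig s u" by (rule S_le[OF sane gp dp])
  have IH: "lpF p ?sd ?al ?be u v = Sig s u - ?S u v" if "length u + length v < length x + length y" for u v
  proof -
    have "lpF p ?sd ?al ?be u v = ((?S u u - ?S u v) powr (1 / p)) powr p"
      unfolding lpF_def using less.hyps[OF that] by simp
    also have "\<dots> = Sig s u - ?S u v" using pp Sle[of u v] by (simp add: powr_powr Sd)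
    finally show ?thesis .
  qed
  consider "x = []" "y = []" | "x = []" "y \<noteq> []" | "x \<noteq> []" "y = []" | "x \<noteq> []" "y \<noteq> []" by blast
  then show ?case
  proof cases
    case 1 then show ?thesis by simp
  next
    case 2 then show ?thesis by (simp add: lp_nil1 S_nil1)
  next
    case 3 then show ?thesis by (simp add: lp_nil2 S_nil2)
  next
    case 4
    have e1: "lpF p ?sd ?al ?be (butlast x) (butlast y) + ?sd (last x) (last y) powr p
        = Sig s x - (?S (butlast x) (butlast y) + s (last x) (last y))"
    proof -
      have lt: "length (butlast x) + length (butlast y) < length x + length y" using 4 by (cases x; cases y) auto
      have "s (last x) (last y) \<le> s (last x) (last x)" using sane by (simp add: sane_scoring_def)
      then have "?sd (last x) (last y) powr p = s (last x) (last x) - s (last x) (last y)"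
        using pp by (simp add: score_dist_def powr_powr)
      then show ?thesis using IH[OF lt] Sig_butlast[OF 4(1), of s] by simp
    qed
    have e2: "lpF p ?sd ?al ?be x (take (length y - k) y) + ?al (drop (length y - k) y) powr p
        = Sig s x - (?S x (take (length y - k) y) - g (drop (length y - k) y))" if k: "k \<in> {1..length y}" for k
    proof -
      have lt: "length x + length (take (length y - k) y) < length x + length y" using k 4 by auto
      have "drop (length y - k) y \<noteq> []" using k by auto
      then have "?al (drop (length y - k) y) powr p = g (drop (length y - k) y)"
        using pp gp[of "drop (length y - k) y"] by (simp add: powr_powr)
      then show ?thesis using IH[OF lt] by simp
    qed
    have e3: "lpF p ?sd ?al ?be (take (length x - k) x) y + ?be (drop (length x - k) x) powr p
        = Sig s x - (?S (take (length x - k) x) y - dl (drop (length x - k) x))" if k: "k \<in> {1..length x}" for k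
    proof -
      have lt: "length (take (length x - k) x) + length y < length x + length y" using k 4 by auto
      have "drop (length x - k) x \<noteq> []" using k by auto
      then have "?be (drop (length x - k) x) powr p = Sig s (drop (length x - k) x) + dl (drop (length x - k) x)"
        using pp dp[of "drop (length x - k) x"] Sig_nn[OF sane, of "drop (length x - k) x"] by (simp add: powr_powr Sd)
      then show ?thesis using IH[OF lt] Sig_take[of s x "length x - k"] by simp
    qed
    have "Fset p ?sd ?al ?be x y = (\<lambda>e. Sig s x - e) ` Sset s g dl x y"
    proof -
      have A: "(\<lambda>k. lpF p ?sd ?al ?be x (take (length y - k) y) + ?al (drop (length y - k) y) powr p) ` {1..length y}
          = (\<lambda>k. Sig s x - (?S x (take (length y - k) y) - g (drop (length y - k) y))) ` {1..length y}"
        by (rule image_cong[OF refl e2])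
      have B: "(\<lambda>k. lpF p ?sd ?al ?be (take (length x - k) x) y + ?be (drop (length x - k) x) powr p) ` {1..length x}
          = (\<lambda>k. Sig s x - (?S (take (length x - k) x) y - dl (drop (length x - k) x))) ` {1..length x}"
        by (rule image_cong[OF refl e3])
      show ?thesis
        unfolding Fset_def Sset_def A B e1 image_Un image_insert image_empty image_image by simp
    qed
    then have "Min (Fset p ?sd ?al ?be x y) = Sig s x - ?S x y"
      using 4 by (simp add: min_neg Sset_fin Sset_ne S_rec)
    then show ?thesis using 4 by (simp add: lp_rec Sd)
  qed
qed



definition hp :: "('a \<Rightarrow> real) \<Rightarrow> ('a list \<Rightarrow> real) \<Rightarrow> 'a list \<Rightarrow> real" where
  "hp c g w = (if w = [] then 0 else sum_list (map c w) + g w)"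

lemma CL_pos: "gap_CL g \<Longrightarrow> w \<noteq> [] \<Longrightarrow> 0 < g w"
  by (simp add: gap_CL_def gap_penalty_def)

lemma hp_sub: "gap_CL g \<Longrightarrow> hp c g (x @ y) \<le> hp c g x + hp c g y"
  by (auto simp: hp_def gap_CL_def gap_penalty_def)

lemma hp_inc:
  assumes c: "\<And>a. 0 \<le> c a" and g: "gap_CL g"
  shows "hp c g (u @ v) \<le> hp c g (u @ x @ v)"
proof (cases "u @ v = []")
  case True
  have s0: "0 \<le> sum_list (map c x)" using c by (intro sum_list_nonneg) auto
  have "0 \<le> hp c g x"
    using CL_pos[OF g, of x] s0 by (auto simp: hp_def)
  then show ?thesis using True by (simp add: hp_def)
next
  case False
  have "g (u @ v) \<le> g (u @ x @ v)" using g False by (simp add: gap_CL_def increasing_gap_def)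
  moreover have "0 \<le> sum_list (map c x)" using c by (intro sum_list_nonneg) auto
  ultimately show ?thesis using False by (auto simp: hp_def)
qed

lemma hp_swap:
  assumes g: "gap_CL g"
  shows "hp c g (x @ y) = hp c g (y @ x)"
proof -
  obtain \<phi> \<psi> where e: "\<And>z. z \<noteq> [] \<Longrightarrow> g z = sum_list (map \<phi> z) + \<psi> (length z)"
    using g unfolding gap_CL_def by blast
  show ?thesis
  proof (cases "x @ y = []")
    case True then show ?thesis by (simp add: hp_def)
  next
    case False
    then have "y @ x \<noteq> []" by auto
    then show ?thesis using False e[of "x @ y"] e[of "y @ x"] by (auto simp: hp_def add.commute)
  qed
qed

lemma sum_lip:
  fixes f :: "'a \<Rightarrow> real"
  shows "length r = length t \<Longrightarrow> (\<And>a b. f b - f a \<le> e a b)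
    \<Longrightarrow> sum_list (map f t) \<le> sum_list (map f r) + sum_list (map2 e r t)"
proof (induction r t rule: list_induct2)
  case Nil then show ?case by simp
next
  case (Cons a r b t)
  have "f b - f a \<le> e a b" by (rule Cons.prems)
  then show ?case using Cons.IH[OF Cons.prems] by simp
qed

lemma hp_lip:
  assumes g: "gap_CL g" and l: "length r = length t" and h: "\<And>a b. hp c g [b] - hp c g [a] \<le> e a b"
  shows "hp c g t \<le> hp c g r + sum_list (map2 e r t)"
proof -
  obtain \<phi> \<psi> where ge: "\<And>z. z \<noteq> [] \<Longrightarrow> g z = sum_list (map \<phi> z) + \<psi> (length z)"
    using g unfolding gap_CL_def by blast
  show ?thesis
  proof (cases "r = []")
    case True then show ?thesis using l by (simp add: hp_def)
  next
    case False
    then have tne: "t \<noteq> []" using l by auto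
    have h1: "(\<lambda>a. c a + \<phi> a) b - (\<lambda>a. c a + \<phi> a) a \<le> e a b" for a b
      using h[of b a] ge[of "[a]"] ge[of "[b]"] by (simp add: hp_def)
    have "sum_list (map (\<lambda>a. c a + \<phi> a) t) \<le> sum_list (map (\<lambda>a. c a + \<phi> a) r) + sum_list (map2 e r t)"
      by (rule sum_lip[OF l h1])
    then show ?thesis using False tne ge[of r] ge[of t] l by (simp add: hp_def sum_list_addf)
  qed
qed

theorem corollary4p7:
  fixes s :: "'a \<Rightarrow> 'a \<Rightarrow> real" and p :: real
    and \<gamma> \<delta> :: "'a list \<Rightarrow> real"
  assumes "1 \<le> p"
    and "sane_scoring s"
    and "quasi_metric (score_dist p s)"
    and "gap_CL \<gamma>" and "gap_CL \<delta>"
    and "\<forall>a b. \<gamma> [b] - \<gamma> [a] \<le> score_dist p s a b powr p"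
    and "\<forall>a b. s a a + \<delta> [a] - s b b - \<delta> [b] \<le> score_dist p s a b powr p"
  shows "quasi_metric (lp_edit p (score_dist p s) (\<lambda>x. \<gamma> x powr (1 / p))
            (\<lambda>x. (glob_sim s \<gamma> \<delta> x x + \<delta> x) powr (1 / p)))
    \<and> (\<forall>x y. lp_edit p (score_dist p s) (\<lambda>x. \<gamma> x powr (1 / p))
            (\<lambda>x. (glob_sim s \<gamma> \<delta> x x + \<delta> x) powr (1 / p)) x y
          = (glob_sim s \<gamma> \<delta> x x - glob_sim s \<gamma> \<delta> x y) powr (1 / p))"
proof -
  note p = assms(1) and sane = assms(2) and qm = assms(3) and gCL = assms(4) and dCL = assms(5)
    and hg = assms(6) and hd = assms(7)
  have pp: "0 < p" using p by simp
  have gp: "\<And>w. w \<noteq> [] \<Longrightarrow> 0 < \<gamma> w" by (rule CL_pos[OF gCL])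
  have dp: "\<And>w. w \<noteq> [] \<Longrightarrow> 0 < \<delta> w" by (rule CL_pos[OF dCL])
  have Sd: "\<And>w. glob_sim s \<gamma> \<delta> w w = Sig s w" by (rule S_diag[OF sane gp dp])
  have cnn: "\<And>a. 0 \<le> s a a" using sane by (simp add: sane_scoring_def less_imp_le)
  let ?sd = "score_dist p s"
  let ?al = "\<lambda>x. \<gamma> x powr (1 / p)"
  let ?be = "\<lambda>x. (glob_sim s \<gamma> \<delta> x x + \<delta> x) powr (1 / p)"
  have pwal: "pw p ?al = hp (\<lambda>_. 0) \<gamma>"
  proof
    fix w show "pw p ?al w = hp (\<lambda>_. 0) \<gamma> w"
      using gp[of w] pp by (cases "w = []") (simp_all add: pw_def hp_def powr_powr)
  qed
  have pwbe: "pw p ?be = hp (\<lambda>a. s a a) \<delta>"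
  proof
    fix w show "pw p ?be w = hp (\<lambda>a. s a a) \<delta> w"
      using dp[of w] pp Sig_nn[OF sane, of w] by (cases "w = []") (simp_all add: pw_def hp_def powr_powr Sd Sig_def)
  qed
  have sdp: "?sd a b powr p = s a a - s a b" for a b
  proof -
    have "s a b \<le> s a a" using sane by (simp add: sane_scoring_def)
    then show ?thesis using pp by (simp add: score_dist_def powr_powr)
  qed
  have inst: "lpe p ?sd ?al ?be"
  proof (unfold_locales, unfold pwal pwbe)
    show "1 \<le> p" by (rule p)
    show "\<And>a b. 0 \<le> ?sd a b" by (simp add: score_dist_def)
    show "\<And>a c b. ?sd a c \<le> ?sd a b + ?sd b c" using qm by (simp add: quasi_metric_def)
    show "\<And>w. w \<noteq> [] \<Longrightarrow> 0 < ?al w"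
    proof -
      fix w :: "'a list" assume "w \<noteq> []"
      then have "0 < \<gamma> w" by (rule gp)
      then show "0 < ?al w" by simp
    qed
    show "\<And>w. w \<noteq> [] \<Longrightarrow> 0 < ?be w"
    proof -
      fix w :: "'a list" assume "w \<noteq> []"
      then have "0 < Sig s w + \<delta> w" using dp[of w] Sig_nn[OF sane, of w] by simp
      then show "0 < ?be w" by (simp add: Sd)
    qed
    show "\<And>x y. hp (\<lambda>_. 0) \<gamma> (x @ y) \<le> hp (\<lambda>_. 0) \<gamma> x + hp (\<lambda>_. 0) \<gamma> y" by (rule hp_sub[OF gCL])
    show "\<And>x y. hp (\<lambda>a. s a a) \<delta> (x @ y) \<le> hp (\<lambda>a. s a a) \<delta> x + hp (\<lambda>a. s a a) \<delta> y" by (rule hp_sub[OF dCL])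
    show "\<And>u v x. hp (\<lambda>_. 0) \<gamma> (u @ v) \<le> hp (\<lambda>_. 0) \<gamma> (u @ x @ v)" by (rule hp_inc[OF _ gCL]) simp
    show "\<And>u v x. hp (\<lambda>a. s a a) \<delta> (u @ v) \<le> hp (\<lambda>a. s a a) \<delta> (u @ x @ v)" by (rule hp_inc[OF cnn dCL])
    show "\<And>x y. hp (\<lambda>_. 0) \<gamma> (x @ y) = hp (\<lambda>_. 0) \<gamma> (y @ x)" by (rule hp_swap[OF gCL])
    show "\<And>x y. hp (\<lambda>a. s a a) \<delta> (x @ y) = hp (\<lambda>a. s a a) \<delta> (y @ x)" by (rule hp_swap[OF dCL])
    show "\<And>r t. length r = length t \<Longrightarrow> hp (\<lambda>_. 0) \<gamma> t \<le> hp (\<lambda>_. 0) \<gamma> r + dsum p ?sd r t"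
      unfolding dsum_def
      by (rule hp_lip[OF gCL]) (use hg in \<open>auto simp: hp_def\<close>)
    show "\<And>r t. length r = length t \<Longrightarrow> hp (\<lambda>a. s a a) \<delta> r \<le> hp (\<lambda>a. s a a) \<delta> t + dsum p ?sd r t"
    proof -
      fix r t :: "'a list" assume l: "length r = length t"
      have h: "hp (\<lambda>a. s a a) \<delta> r \<le> hp (\<lambda>a. s a a) \<delta> t + sum_list (map2 (\<lambda>a b. ?sd b a powr p) t r)"
      proof (rule hp_lip[OF dCL])
        show "length t = length r" using l by simp
        fix a b
        show "hp (\<lambda>a. s a a) \<delta> [b] - hp (\<lambda>a. s a a) \<delta> [a] \<le> ?sd b a powr p"
          using hd[rule_format, of b a] by (simp add: hp_def)
      qed
      have e: "sum_list (map2 (\<lambda>a b. ?sd b a powr p) t r) = dsum p ?sd r t"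
        using dsum_flip[of p ?sd t r] unfolding dsum_def by (simp only:)
      show "hp (\<lambda>a. s a a) \<delta> r \<le> hp (\<lambda>a. s a a) \<delta> t + dsum p ?sd r t"
        using h unfolding e .
    qed
  qed
  have dqm: "\<And>a b. (?sd a b = 0 \<and> ?sd b a = 0) \<longleftrightarrow> a = b"
    using qm by (simp add: quasi_metric_def)
  show ?thesis
  proof
    show "quasi_metric (lp_edit p ?sd ?al ?be)" by (rule lpe.D_qm[OF inst dqm])
    show "\<forall>x y. lp_edit p ?sd ?al ?be x y = (glob_sim s \<gamma> \<delta> x x - glob_sim s \<gamma> \<delta> x y) powr (1 / p)"
      by (intro allI) (rule lp_eq[OF p sane gp dp])
  qed
qed


end
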